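(* Let $\mathcal{X}=\mathcal{X}_1\times\cdots\times\mathcal{X}_n$ and $\mathcal{Y}=\mathcal{Y}_1\times\cdots\times\mathcal{Y}_m$ be finite sets. If $$1+\sum_{j\in[m]}(|\mathcal{Y}_j|-1)\;\geq\;|\mathcal{X}|\Big/\max_{i\in[n]}|\mathcal{X}_i|,$$ then $\operatorname{RBM}_{\mathcal{X},\mathcal{Y}}$ is a universal approximator, i.e., every probability distribution on $\mathcal{X}$ can be approximated arbitrarily well by distributions from $\operatorname{RBM}_{\mathcal{X},\mathcal{Y}}$.
   Context: For a finite product set $\mathcal{Z}=\mathcal{Z}_1\times\cdots\times\mathcal{Z}_k$, fix in each $\mathcal{Z}_i$ a reference state $z_i^0$ and let $F^{\mathcal{Z}}(z)=\big(1,(\mathbb{1}[z_i=a])_{i\in[k],\,a\in\mathcal{Z}_i\setminus\{z_i^0\}}\big)^\top$ be the sufficient statistics of the independence model on $\mathcal{Z}$. The restricted Boltzmann machine model $\operatorname{RBM}_{\mathcal{X},\mathcal{Y}}$ is the set of probability distributions on $\mathcal{X}$ of the form $p(x)=\frac{1}{Z(\Theta)}\sum_{y\in\mathcal{Y}}\exp\big(F^{\mathcal{X}}(x)^\top\Theta F^{\mathcal{Y}}(y)\big)$, $x\in\mathcal{X}$, for all real matrices $\Theta$ of the appropriate size, with $Z(\Theta)$ the normalizing constant. "Approximated arbitrarily well" means lying in the topological closure of the model within the probability simplex on $\mathcal{X}$. *)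

theory Defs
  imports "HOL-Analysis.Analysis"
begin

text \<open>Index set of the sufficient statistics F^Z: None is the constant coordinate 1,
  Some (i,a) is the coordinate for the indicator [z_i = a], a in Z_i minus {z0 i}.\<close>

definition suff_idx :: "nat \<Rightarrow> (nat \<Rightarrow> 'a set) \<Rightarrow> (nat \<Rightarrow> 'a) \<Rightarrow> (nat \<times> 'a) option set" where
  "suff_idx k Z z0 = insert None (Some ` (SIGMA i:{..<k}. Z i - {z0 i}))"

definition suff_stat :: "(nat \<Rightarrow> 'a) \<Rightarrow> (nat \<times> 'a) option \<Rightarrow> real" where
  "suff_stat z s = (case s of None \<Rightarrow> 1 | Some (i, a) \<Rightarrow> (if z i = a then 1 else 0))"

definition rbm_energy ::
  "nat \<Rightarrow> (nat \<Rightarrow> 'a set) \<Rightarrow> (nat \<Rightarrow> 'a) \<Rightarrow> nat \<Rightarrow> (nat \<Rightarrow> 'b set) \<Rightarrow> (nat \<Rightarrow> 'b) \<Rightarrow>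
   ((nat \<times> 'a) option \<Rightarrow> (nat \<times> 'b) option \<Rightarrow> real) \<Rightarrow> (nat \<Rightarrow> 'a) \<Rightarrow> (nat \<Rightarrow> 'b) \<Rightarrow> real" where
  "rbm_energy n Xs x0 m Ys y0 \<Theta> x y =
     (\<Sum>s\<in>suff_idx n Xs x0. \<Sum>t\<in>suff_idx m Ys y0. suff_stat x s * \<Theta> s t * suff_stat y t)"

definition rbm_weight ::
  "nat \<Rightarrow> (nat \<Rightarrow> 'a set) \<Rightarrow> (nat \<Rightarrow> 'a) \<Rightarrow> nat \<Rightarrow> (nat \<Rightarrow> 'b set) \<Rightarrow> (nat \<Rightarrow> 'b) \<Rightarrow>
   ((nat \<times> 'a) option \<Rightarrow> (nat \<times> 'b) option \<Rightarrow> real) \<Rightarrow> (nat \<Rightarrow> 'a) \<Rightarrow> real" where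
  "rbm_weight n Xs x0 m Ys y0 \<Theta> x =
     (\<Sum>y\<in>PiE {..<m} Ys. exp (rbm_energy n Xs x0 m Ys y0 \<Theta> x y))"

definition rbm_dist ::
  "nat \<Rightarrow> (nat \<Rightarrow> 'a set) \<Rightarrow> (nat \<Rightarrow> 'a) \<Rightarrow> nat \<Rightarrow> (nat \<Rightarrow> 'b set) \<Rightarrow> (nat \<Rightarrow> 'b) \<Rightarrow>
   ((nat \<times> 'a) option \<Rightarrow> (nat \<times> 'b) option \<Rightarrow> real) \<Rightarrow> (nat \<Rightarrow> 'a) \<Rightarrow> real" where
  "rbm_dist n Xs x0 m Ys y0 \<Theta> =
     (\<lambda>x. if x \<in> PiE {..<n} Xs
          then rbm_weight n Xs x0 m Ys y0 \<Theta> x / (\<Sum>x'\<in>PiE {..<n} Xs. rbm_weight n Xs x0 m Ys y0 \<Theta> x')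
          else 0)"

definition RBM ::
  "nat \<Rightarrow> (nat \<Rightarrow> 'a set) \<Rightarrow> (nat \<Rightarrow> 'a) \<Rightarrow> nat \<Rightarrow> (nat \<Rightarrow> 'b set) \<Rightarrow> (nat \<Rightarrow> 'b) \<Rightarrow>
   ((nat \<Rightarrow> 'a) \<Rightarrow> real) set" where
  "RBM n Xs x0 m Ys y0 = range (rbm_dist n Xs x0 m Ys y0)"

definition prob_simplex :: "'c set \<Rightarrow> ('c \<Rightarrow> real) set" where
  "prob_simplex X = {p. (\<forall>x. x \<notin> X \<longrightarrow> p x = 0) \<and> (\<forall>x\<in>X. 0 \<le> p x) \<and> sum p X = 1}"

end

theory Submission
  imports Defs
begin

lemma suff_sum:
  assumes z: "z \<in> PiE {..<k} Z" and fin: "\<And>i. i<k \<Longrightarrow> finite (Z i)"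
  shows "(\<Sum>s\<in>suff_idx k Z zr. suff_stat z s * w s)
       = w None + (\<Sum>i<k. if z i = zr i then 0 else w (Some (i, z i)))"
proof -
  let ?S = "SIGMA i:{..<k}. Z i - {zr i}"
  have fS: "finite ?S" using fin by auto
  have "(\<Sum>s\<in>suff_idx k Z zr. suff_stat z s * w s)
      = w None + (\<Sum>s\<in>Some ` ?S. suff_stat z s * w s)"
    unfolding suff_idx_def using fS by (subst sum.insert) (auto simp: suff_stat_def)
  also have "(\<Sum>s\<in>Some ` ?S. suff_stat z s * w s) = (\<Sum>p\<in>?S. suff_stat z (Some p) * w (Some p))"
    by (subst sum.reindex) auto
  also have "\<dots> = (\<Sum>i<k. \<Sum>a\<in>Z i - {zr i}. suff_stat z (Some (i,a)) * w (Some (i,a)))"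
    using fin by (subst sum.Sigma) auto
  also have "\<dots> = (\<Sum>i<k. if z i = zr i then 0 else w (Some (i, z i)))"
  proof (rule sum.cong[OF refl])
    fix i assume i: "i \<in> {..<k}"
    have "(\<Sum>a\<in>Z i - {zr i}. suff_stat z (Some (i,a)) * w (Some (i,a)))
        = (\<Sum>a\<in>Z i - {zr i}. if z i = a then w (Some (i,a)) else 0)"
      by (rule sum.cong) (auto simp: suff_stat_def)
    also have "\<dots> = (if z i \<in> Z i - {zr i} then w (Some (i, z i)) else 0)"
      using fin i by (subst sum.delta') auto
    also have "\<dots> = (if z i = zr i then 0 else w (Some (i, z i)))"
      using z i by (auto simp: PiE_iff)
    finally show "(\<Sum>a\<in>Z i - {zr i}. suff_stat z (Some (i,a)) * w (Some (i,a)))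
        = (if z i = zr i then 0 else w (Some (i, z i)))" .
  qed
  finally show ?thesis .
qed

definition thetaV :: "nat \<Rightarrow> (nat \<Rightarrow> 'a) \<Rightarrow> ((nat \<times> 'b) option \<Rightarrow> nat \<Rightarrow> 'a \<Rightarrow> real)
    \<Rightarrow> (nat \<times> 'a) option \<Rightarrow> (nat \<times> 'b) option \<Rightarrow> real" where
  "thetaV n x0 V s t = (case s of None \<Rightarrow> (\<Sum>i<n. V t i (x0 i)) | Some (i,a) \<Rightarrow> V t i a - V t i (x0 i))"

lemma thetaV_None[simp]: "thetaV n x0 V None t = (\<Sum>i<n. V t i (x0 i))"
  by (simp add: thetaV_def)
lemma thetaV_Some[simp]: "thetaV n x0 V (Some p) t = V t (fst p) (snd p) - V t (fst p) (x0 (fst p))"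
  by (simp add: thetaV_def split: prod.split)

lemma phi_thetaV:
  assumes x: "x \<in> PiE {..<n} Xs" and fin: "\<And>i. i<n \<Longrightarrow> finite (Xs i)"
  shows "(\<Sum>s\<in>suff_idx n Xs x0. suff_stat x s * thetaV n x0 V s t) = (\<Sum>i<n. V t i (x i))"
proof -
  have "(\<Sum>s\<in>suff_idx n Xs x0. suff_stat x s * thetaV n x0 V s t)
     = (\<Sum>i<n. V t i (x0 i)) + (\<Sum>i<n. if x i = x0 i then 0 else V t i (x i) - V t i (x0 i))"
    using suff_sum[OF x fin, where zr=x0 and w="\<lambda>s. thetaV n x0 V s t"] by (simp cong: if_cong)
  also have "(\<Sum>i<n. if x i = x0 i then 0 else V t i (x i) - V t i (x0 i))
      = (\<Sum>i<n. V t i (x i) - V t i (x0 i))"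
    by (rule sum.cong) auto
  finally show ?thesis by (simp add: sum_subtractf)
qed

lemma energy_thetaV:
  assumes x: "x \<in> PiE {..<n} Xs" and finX: "\<And>i. i<n \<Longrightarrow> finite (Xs i)"
    and y: "y \<in> PiE {..<m} Ys" and finY: "\<And>j. j<m \<Longrightarrow> finite (Ys j)"
  shows "rbm_energy n Xs x0 m Ys y0 (thetaV n x0 V) x y
     = (\<Sum>i<n. V None i (x i)) + (\<Sum>j<m. if y j = y0 j then 0 else (\<Sum>i<n. V (Some (j, y j)) i (x i)))"
proof -
  have fX: "finite (suff_idx n Xs x0)" using finX by (auto simp: suff_idx_def)
  have fY: "finite (suff_idx m Ys y0)" using finY by (auto simp: suff_idx_def)
  have "rbm_energy n Xs x0 m Ys y0 (thetaV n x0 V) x y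
      = (\<Sum>t\<in>suff_idx m Ys y0. suff_stat y t * (\<Sum>s\<in>suff_idx n Xs x0. suff_stat x s * thetaV n x0 V s t))"
    unfolding rbm_energy_def
    by (subst sum.swap) (simp add: sum_distrib_left sum_distrib_right mult.commute mult.left_commute)
  also have "\<dots> = (\<Sum>t\<in>suff_idx m Ys y0. suff_stat y t * (\<Sum>i<n. V t i (x i)))"
    by (simp add: phi_thetaV[OF x finX])
  also have "\<dots> = (\<Sum>i<n. V None i (x i)) + (\<Sum>j<m. if y j = y0 j then 0 else (\<Sum>i<n. V (Some (j, y j)) i (x i)))"
    by (rule suff_sum[OF y finY])
  finally show ?thesis .
qed

lemma weight_thetaV:
  assumes x: "x \<in> PiE {..<n} Xs" and finX: "\<And>i. i<n \<Longrightarrow> finite (Xs i)"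
    and finY: "\<And>j. j<m \<Longrightarrow> finite (Ys j)"
  shows "rbm_weight n Xs x0 m Ys y0 (thetaV n x0 V) x
     = exp (\<Sum>i<n. V None i (x i)) *
       (\<Prod>j<m. \<Sum>b\<in>Ys j. exp (if b = y0 j then 0 else (\<Sum>i<n. V (Some (j, b)) i (x i))))"
proof -
  have "rbm_weight n Xs x0 m Ys y0 (thetaV n x0 V) x
     = (\<Sum>y\<in>PiE {..<m} Ys. exp (\<Sum>i<n. V None i (x i)) *
          (\<Prod>j<m. exp (if y j = y0 j then 0 else (\<Sum>i<n. V (Some (j, y j)) i (x i)))))"
    unfolding rbm_weight_def
    by (rule sum.cong[OF refl]) (simp add: energy_thetaV[OF x finX _ finY] exp_add exp_sum)
  also have "\<dots> = exp (\<Sum>i<n. V None i (x i)) *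
       (\<Prod>j<m. \<Sum>b\<in>Ys j. exp (if b = y0 j then 0 else (\<Sum>i<n. V (Some (j, b)) i (x i))))"
    by (subst prod_sum_PiE) (auto simp: finY sum_distrib_left)
  finally show ?thesis .
qed

lemma tendsto_fun_pointwise:
  fixes f :: "'i \<Rightarrow> 'c \<Rightarrow> real"
  assumes "\<And>x. ((\<lambda>N. f N x) \<longlongrightarrow> l x) F"
  shows "(f \<longlongrightarrow> l) F"
proof -
  have "limitin (product_topology (\<lambda>i. euclidean) UNIV) f l F"
    using assms by (simp add: limitin_componentwise)
  then show ?thesis by (simp add: euclidean_product_topology)
qed

lemma line_sum_eq:
  fixes n k :: nat
  assumes "k < n" "\<forall>i<n. i \<noteq> k \<longrightarrow> x i = p i"
  shows "(\<Sum>i<n. if i = k then A else (if x i = p i then 0 else -c)) = (A::real)"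
proof -
  have "(\<Sum>i<n. if i = k then A else (if x i = p i then 0 else -c)) = (\<Sum>i<n. if i = k then A else 0)"
    by (rule sum.cong) (auto simp: assms)
  also have "\<dots> = A" using assms(1) by (subst sum.delta) auto
  finally show ?thesis .
qed

lemma line_sum_le:
  fixes n k :: nat
  assumes "k < n" "i0 < n" "i0 \<noteq> k" "x i0 \<noteq> p i0" "c \<ge> 0"
  shows "(\<Sum>i<n. if i = k then A else (if x i = p i then 0 else -c)) \<le> (A::real) - c"
proof -
  define g2 where "g2 = (\<lambda>i. if i = k then 0 else (if x i = p i then 0 else -c))"
  have "(\<Sum>i<n. if i = k then A else (if x i = p i then 0 else -c)) = (\<Sum>i<n. (if i = k then A else 0) + g2 i)"
    by (rule sum.cong) (auto simp: g2_def)
  also have "\<dots> = A + sum g2 {..<n}" using assms(1) by (simp add: sum.distrib)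
  also have "sum g2 {..<n} = g2 i0 + sum g2 ({..<n} - {i0})"
    using assms(2) by (subst sum.remove) auto
  also have "sum g2 ({..<n} - {i0}) \<le> 0" by (rule sum_nonpos) (auto simp: g2_def assms(5))
  finally show ?thesis using assms by (simp add: g2_def)
qed

lemma pi_eq_iff:
  assumes "x \<in> PiE {..<n} Xs" "p \<in> PiE {..<n} Xs" "p k = x0 k"
  shows "(x(k := x0 k) = p) \<longleftrightarrow> (\<forall>i<n. i \<noteq> k \<longrightarrow> x i = p i)"
  using assms by (auto simp: fun_eq_iff PiE_iff extensional_def) (metis not_less)

lemma exp_neg_nat_tendsto: "((\<lambda>N::nat. C * exp (- real N)) \<longlongrightarrow> 0) sequentially"
proof -
  have "(\<lambda>N::nat. exp (- real N)) = (\<lambda>N. exp (-1) ^ N)"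
    by (simp add: exp_of_nat_mult[symmetric])
  moreover have "((\<lambda>N::nat. exp (-1::real) ^ N) \<longlongrightarrow> 0) sequentially"
    by (rule LIMSEQ_power_zero) simp
  ultimately show ?thesis by (metis tendsto_mult_right_zero)
qed

lemma positive_in_closure:
  fixes n m k :: nat and Xs :: "nat \<Rightarrow> 'a set" and Ys :: "nat \<Rightarrow> 'b set"
    and x0 :: "nat \<Rightarrow> 'a" and y0 :: "nat \<Rightarrow> 'b" and q :: "(nat \<Rightarrow> 'a) \<Rightarrow> real"
  assumes hX: "\<And>i. i < n \<Longrightarrow> finite (Xs i) \<and> x0 i \<in> Xs i"
    and hY: "\<And>j. j < m \<Longrightarrow> finite (Ys j) \<and> y0 j \<in> Ys j"
    and k: "k < n"
    and hcard: "card {p \<in> PiE {..<n} Xs. p k = x0 k} \<le> 1 + card (SIGMA j:{..<m}. Ys j - {y0 j})"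
    and q0: "\<And>x. x \<notin> PiE {..<n} Xs \<Longrightarrow> q x = 0"
    and qpos: "\<And>x. x \<in> PiE {..<n} Xs \<Longrightarrow> q x > 0"
    and qsum: "sum q (PiE {..<n} Xs) = 1"
  shows "q \<in> closure (RBM n Xs x0 m Ys y0)"
proof -
  define X where "X = PiE {..<n} Xs"
  define P where "P = {p \<in> X. p k = x0 k}"
  define H where "H = (SIGMA j:{..<m}. Ys j - {y0 j})"
  define p0 where "p0 = restrict x0 {..<n}"
  define P' where "P' = P - {p0}"
  have finXs: "\<And>i. i < n \<Longrightarrow> finite (Xs i)" using hX by blast
  have finYs: "\<And>j. j < m \<Longrightarrow> finite (Ys j)" using hY by blast
  have finX: "finite X" using hX by (auto simp: X_def intro!: finite_PiE)
  have p0X: "p0 \<in> X" using hX by (auto simp: X_def p0_def)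
  have p0P: "p0 \<in> P" using p0X k by (auto simp: P_def p0_def)
  have finP: "finite P" using finX by (auto simp: P_def)
  have finP': "finite P'" using finP by (auto simp: P'_def)
  have finH: "finite H" using hY by (auto simp: H_def)
  have "card P' \<le> card H"
    using hcard p0P finP by (simp add: P'_def card_Diff_singleton X_def P_def H_def)
  then obtain \<iota> where \<iota>H: "\<iota> ` P' \<subseteq> H" and \<iota>inj: "inj_on \<iota> P'"
    using card_le_inj[OF finP' finH] by blast
  have qposX: "\<And>x. x \<in> X \<Longrightarrow> q x > 0" using qpos by (simp add: X_def)
  define m0 where "m0 = Min (q ` X)"
  have m0pos: "m0 > 0" using finX p0X qposX unfolding m0_def by (subst Min_gr_iff) auto
  have qge: "\<And>x. x \<in> X \<Longrightarrow> m0 \<le> q x" using finX by (auto simp: m0_def)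
  have qle1: "\<And>x. x \<in> X \<Longrightarrow> q x \<le> 1"
  proof -
    fix x assume "x \<in> X"
    then have "q x \<le> sum q X" using finX qposX by (intro member_le_sum) (auto intro: less_imp_le)
    then show "q x \<le> 1" using qsum by (simp add: X_def)
  qed
  define \<kappa> where "\<kappa> = - ln (m0/2)"
  have exp\<kappa>: "exp (-\<kappa>) = m0/2" using m0pos by (simp add: \<kappa>_def)
  have "m0 \<le> 1" using qge qle1 p0X by (meson order_trans)
  then have \<kappa>pos: "\<kappa> \<ge> 0" using m0pos by (simp add: \<kappa>_def)
  define V0 where "V0 = (\<lambda>i a. if i = k then ln (q (p0(k := a))) else (if a = p0 i then 0 else -\<kappa>))"
  define r where "r = (\<lambda>z. exp (\<Sum>i<n. V0 i (z i)))"
  define V where "V = (\<lambda>(lam::real) (t::(nat \<times> 'b) option) i a. case t of None \<Rightarrow> V0 i a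
     | Some jb \<Rightarrow> if jb \<in> \<iota> ` P' then
          (if i = k then ln (q ((inv_into P' \<iota> jb)(k := a)) / r ((inv_into P' \<iota> jb)(k := a)) - 1)
           else (if a = inv_into P' \<iota> jb i then 0 else -lam))
        else (if i = k then -lam else 0))"
  have \<pi>P: "\<And>x. x \<in> X \<Longrightarrow> x(k := x0 k) \<in> P"
    using hX k by (auto simp: X_def P_def PiE_iff extensional_def)
  have upd: "\<And>x. (x(k := x0 k))(k := x k) = x" by auto
  have updX: "\<And>p a. p \<in> X \<Longrightarrow> a \<in> Xs k \<Longrightarrow> p(k := a) \<in> X"
    using k by (auto simp: X_def PiE_iff extensional_def)
  have xkX: "\<And>x. x \<in> X \<Longrightarrow> x k \<in> Xs k" using k by (auto simp: X_def PiE_iff)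
  have eqiff: "\<And>x p. x \<in> X \<Longrightarrow> p \<in> P \<Longrightarrow> (x(k := x0 k) = p) \<longleftrightarrow> (\<forall>i<n. i \<noteq> k \<longrightarrow> x i = p i)"
    by (rule pi_eq_iff) (auto simp: X_def P_def)
  have rpos: "\<And>x. r x > 0" by (simp add: r_def)
  have Vsum0: "\<And>x. (\<Sum>i<n. V0 i (x i)) = (\<Sum>i<n. if i = k then ln (q (p0(k := x k))) else (if x i = p0 i then 0 else -\<kappa>))"
    by (rule sum.cong) (auto simp: V0_def)
  have r_L0: "\<And>x. x \<in> X \<Longrightarrow> x(k := x0 k) = p0 \<Longrightarrow> r x = q x"
  proof -
    fix x assume x: "x \<in> X" and e: "x(k := x0 k) = p0"
    then have "\<forall>i<n. i \<noteq> k \<longrightarrow> x i = p0 i" using eqiff p0P by blast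
    then have "(\<Sum>i<n. V0 i (x i)) = ln (q (p0(k := x k)))"
      unfolding Vsum0 by (intro line_sum_eq k)
    moreover have "p0(k := x k) = x" using e upd by metis
    ultimately show "r x = q x" using qposX x by (simp add: r_def)
  qed
  have r_lt: "\<And>x. x \<in> X \<Longrightarrow> x(k := x0 k) \<noteq> p0 \<Longrightarrow> r x < q x"
  proof -
    fix x assume x: "x \<in> X" and e: "x(k := x0 k) \<noteq> p0"
    then obtain i0 where i0: "i0 < n" "i0 \<noteq> k" "x i0 \<noteq> p0 i0" using eqiff p0P by blast
    have pX: "p0(k := x k) \<in> X" using updX p0X xkX x by blast
    have "(\<Sum>i<n. V0 i (x i)) \<le> ln (q (p0(k := x k))) - \<kappa>"
      unfolding Vsum0 by (rule line_sum_le[where x=x and p=p0, OF k i0 \<kappa>pos])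
    then have "r x \<le> exp (ln (q (p0(k := x k))) - \<kappa>)" by (simp add: r_def)
    also have "\<dots> = q (p0(k := x k)) * (m0/2)"
      using qposX[OF pX] exp\<kappa> by (simp add: exp_diff exp_minus field_simps)
    also have "\<dots> \<le> m0/2" using qle1[OF pX] m0pos by simp
    also have "\<dots> < q x" using qge[OF x] m0pos by simp
    finally show "r x < q x" .
  qed
  have Vsum_in: "\<And>lam x jb. jb \<in> \<iota> ` P' \<Longrightarrow> (\<Sum>i<n. V lam (Some jb) i (x i)) =
     (\<Sum>i<n. if i = k then ln (q ((inv_into P' \<iota> jb)(k := x k)) / r ((inv_into P' \<iota> jb)(k := x k)) - 1)
        else (if x i = inv_into P' \<iota> jb i then 0 else -lam))"
    by (rule sum.cong) (auto simp: V_def)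
  have Vsum_out: "\<And>lam x jb. jb \<notin> \<iota> ` P' \<Longrightarrow> (\<Sum>i<n. V lam (Some jb) i (x i)) = -lam"
  proof -
    fix lam x jb assume "jb \<notin> \<iota> ` P'"
    then have "(\<Sum>i<n. V lam (Some jb) i (x i)) = (\<Sum>i<n. if i = k then -lam else 0)"
      by (intro sum.cong) (auto simp: V_def)
    also have "\<dots> = -lam" using k by (subst sum.delta) auto
    finally show "(\<Sum>i<n. V lam (Some jb) i (x i)) = -lam" .
  qed
  define Lim where "Lim = (\<lambda>x j b. if b = y0 j then 1 else
      if x(k := x0 k) \<in> P' \<and> \<iota> (x(k := x0 k)) = (j,b) then q x / r x - 1 else (0::real))"
  have limE: "((\<lambda>N. exp (if b = y0 j then 0 else \<Sum>i<n. V (real N) (Some (j,b)) i (x i))) \<longlongrightarrow> Lim x j b) sequentially"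
    if x: "x \<in> X" for x j b
  proof (cases "b = y0 j")
    case True
    then show ?thesis by (simp add: Lim_def)
  next
    case bne: False
    show ?thesis
    proof (cases "(j,b) \<in> \<iota> ` P'")
      case True
      define p where "p = inv_into P' \<iota> (j,b)"
      have pP': "p \<in> P'" using True by (simp add: p_def inv_into_into)
      have \<iota>p: "\<iota> p = (j,b)" using True by (simp add: p_def f_inv_into_f)
      have pP: "p \<in> P" using pP' by (simp add: P'_def)
      show ?thesis
      proof (cases "x(k := x0 k) = p")
        case True
        have "\<forall>i<n. i \<noteq> k \<longrightarrow> x i = p i" using eqiff[OF x pP] True by blast
        have px: "p(k := x k) = x" using True upd by metis
        have "p \<noteq> p0" using pP' by (simp add: P'_def)
        then have "r x < q x" using r_lt[OF x] True by simp
        then have pos: "q x / r x - 1 > 0" using rpos[of x] by (simp add: field_simps)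
        have "\<And>N. (\<Sum>i<n. V (real N) (Some (j,b)) i (x i)) = ln (q (p(k := x k)) / r (p(k := x k)) - 1)"
          unfolding Vsum_in[OF \<open>(j,b) \<in> \<iota> ` P'\<close>] p_def[symmetric]
          by (rule line_sum_eq[OF k]) (use \<open>\<forall>i<n. i \<noteq> k \<longrightarrow> x i = p i\<close> in auto)
        then have "\<And>N. (\<Sum>i<n. V (real N) (Some (j,b)) i (x i)) = ln (q x / r x - 1)"
          by (simp only: px)
        then have "\<And>N. exp (if b = y0 j then 0 else \<Sum>i<n. V (real N) (Some (j,b)) i (x i)) = q x / r x - 1"
          using bne pos by simp
        moreover have "Lim x j b = q x / r x - 1" using bne True pP' \<iota>p by (simp add: Lim_def)
        ultimately show ?thesis by simp
      next
        case False
        then obtain i0 where i0: "i0 < n" "i0 \<noteq> k" "x i0 \<noteq> p i0" using eqiff[OF x pP] by blast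
        define A where "A = ln (q (p(k := x k)) / r (p(k := x k)) - 1)"
        have le: "exp (if b = y0 j then 0 else \<Sum>i<n. V (real N) (Some (j,b)) i (x i)) \<le> exp A * exp (- real N)" for N
        proof -
          have "(\<Sum>i<n. V (real N) (Some (j,b)) i (x i)) \<le> A - real N"
            unfolding Vsum_in[OF \<open>(j,b) \<in> \<iota> ` P'\<close>] p_def[symmetric] A_def
            by (rule line_sum_le[where x=x and p=p, OF k i0]) simp
          then show ?thesis using bne by (simp add: exp_diff[symmetric] exp_add[symmetric])
        qed
        have "Lim x j b = 0"
        proof -
          have nc: "\<not> (x(k := x0 k) \<in> P' \<and> \<iota> (x(k := x0 k)) = (j,b))"
            using \<iota>inj pP' \<iota>p False by (metis inj_on_def)
          show ?thesis by (simp only: Lim_def if_not_P[OF bne] if_not_P[OF nc])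
        qed
        moreover have "((\<lambda>N. exp (if b = y0 j then 0 else \<Sum>i<n. V (real N) (Some (j,b)) i (x i))) \<longlongrightarrow> 0) sequentially"
          by (rule tendsto_sandwich[OF _ _ tendsto_const exp_neg_nat_tendsto[of "exp A"]])
             (use le in auto)
        ultimately show ?thesis by simp
      qed
    next
      case False
      have nc: "\<not> (x(k := x0 k) \<in> P' \<and> \<iota> (x(k := x0 k)) = (j,b))"
        using False by (metis image_eqI)
      have "Lim x j b = 0" by (simp only: Lim_def if_not_P[OF bne] if_not_P[OF nc])
      moreover have "((\<lambda>N. exp (if b = y0 j then 0 else \<Sum>i<n. V (real N) (Some (j,b)) i (x i))) \<longlongrightarrow> 0) sequentially"
        using exp_neg_nat_tendsto[of 1] bne by (simp add: Vsum_out[OF False])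
      ultimately show ?thesis by simp
    qed
  qed
  have prodLim: "r x * (\<Prod>j<m. \<Sum>b\<in>Ys j. Lim x j b) = q x" if x: "x \<in> X" for x
  proof (cases "x(k := x0 k) \<in> P'")
    case True
    obtain j0 b0 where jb0: "\<iota> (x(k := x0 k)) = (j0, b0)" by (cases "\<iota> (x(k := x0 k))") auto
    have "(j0, b0) \<in> H" using \<iota>H True jb0 by (metis image_subset_iff)
    then have j0: "j0 < m" and b0: "b0 \<in> Ys j0" "b0 \<noteq> y0 j0" by (auto simp: H_def)
    define D where "D = q x / r x - 1"
    have "(\<Sum>b\<in>Ys j. Lim x j b) = 1 + (if j = j0 then D else 0)" if j: "j < m" for j
    proof -
      have "(\<Sum>b\<in>Ys j. Lim x j b) = (\<Sum>b\<in>Ys j. (if b = y0 j then 1 else 0) + (if j = j0 \<and> b = b0 then D else 0))"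
        by (rule sum.cong) (use True jb0 b0 in \<open>auto simp: Lim_def D_def\<close>)
      also have "\<dots> = (\<Sum>b\<in>Ys j. if b = y0 j then 1 else 0) + (\<Sum>b\<in>Ys j. if b = b0 then (if j = j0 then D else 0) else 0)"
        by (simp add: sum.distrib)
      also have "\<dots> = 1 + (if j = j0 then D else 0)"
        using hY[OF j] b0 by (simp add: sum.delta)
      finally show ?thesis .
    qed
    then have "(\<Prod>j<m. \<Sum>b\<in>Ys j. Lim x j b) = (\<Prod>j<m. if j = j0 then 1 + D else 1)"
      by (intro prod.cong) auto
    also have "\<dots> = 1 + D" using j0 by (subst prod.delta) auto
    finally show ?thesis using rpos[of x] by (simp add: D_def field_simps)
  next
    case False
    then have e: "x(k := x0 k) = p0" using \<pi>P[OF x] by (auto simp: P'_def)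
    have "(\<Sum>b\<in>Ys j. Lim x j b) = 1" if j: "j < m" for j
    proof -
      have "(\<Sum>b\<in>Ys j. Lim x j b) = (\<Sum>b\<in>Ys j. if b = y0 j then 1 else 0)"
        by (rule sum.cong) (use False in \<open>auto simp: Lim_def\<close>)
      also have "\<dots> = 1" using hY[OF j] by (simp add: sum.delta)
      finally show ?thesis .
    qed
    then have "(\<Prod>j<m. \<Sum>b\<in>Ys j. Lim x j b) = 1" by simp
    then show ?thesis using r_L0[OF x e] by simp
  qed
  have wform: "rbm_weight n Xs x0 m Ys y0 (thetaV n x0 (V lam)) x
      = r x * (\<Prod>j<m. \<Sum>b\<in>Ys j. exp (if b = y0 j then 0 else \<Sum>i<n. V lam (Some (j,b)) i (x i)))"
    if x: "x \<in> X" for lam x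
    using x by (subst weight_thetaV[where Xs=Xs]) (auto simp: X_def finXs finYs r_def V_def)
  have wlim: "((\<lambda>N. rbm_weight n Xs x0 m Ys y0 (thetaV n x0 (V (real N))) x) \<longlongrightarrow> q x) sequentially"
    if x: "x \<in> X" for x
  proof -
    have "((\<lambda>N. r x * (\<Prod>j<m. \<Sum>b\<in>Ys j. exp (if b = y0 j then 0 else \<Sum>i<n. V (real N) (Some (j,b)) i (x i))))
        \<longlongrightarrow> r x * (\<Prod>j<m. \<Sum>b\<in>Ys j. Lim x j b)) sequentially"
      by (intro tendsto_mult_left tendsto_prod tendsto_sum limE[OF x])
    then show ?thesis using prodLim[OF x] wform[OF x] by simp
  qed
  have distlim: "((\<lambda>N. rbm_dist n Xs x0 m Ys y0 (thetaV n x0 (V (real N))) x) \<longlongrightarrow> q x) sequentially" for x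
  proof (cases "x \<in> X")
    case True
    have "((\<lambda>N. rbm_weight n Xs x0 m Ys y0 (thetaV n x0 (V (real N))) x /
         (\<Sum>x'\<in>X. rbm_weight n Xs x0 m Ys y0 (thetaV n x0 (V (real N))) x')) \<longlongrightarrow> q x / (\<Sum>x'\<in>X. q x')) sequentially"
      using qsum by (intro tendsto_divide tendsto_sum wlim True) (auto simp: X_def)
    then show ?thesis using True qsum by (simp add: rbm_dist_def X_def)
  next
    case False
    then show ?thesis using q0 by (simp add: rbm_dist_def X_def)
  qed
  have lim: "((\<lambda>N. rbm_dist n Xs x0 m Ys y0 (thetaV n x0 (V (real N)))) \<longlongrightarrow> q) sequentially"
    by (rule tendsto_fun_pointwise) (rule distlim)
  have ev: "\<forall>\<^sub>F N in sequentially. rbm_dist n Xs x0 m Ys y0 (thetaV n x0 (V (real N))) \<in> closure (RBM n Xs x0 m Ys y0)"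
    by (intro always_eventually allI closure_subset[THEN subsetD]) (simp add: RBM_def)
  show ?thesis
    by (rule Lim_in_closed_set[OF closed_closure ev trivial_limit_sequentially lim])
qed

theorem corollary2:
  fixes n m :: nat and Xs :: "nat \<Rightarrow> 'a set" and Ys :: "nat \<Rightarrow> 'b set"
    and x0 :: "nat \<Rightarrow> 'a" and y0 :: "nat \<Rightarrow> 'b"
  assumes "0 < n"
    and "\<And>i. i < n \<Longrightarrow> finite (Xs i) \<and> x0 i \<in> Xs i"
    and "\<And>j. j < m \<Longrightarrow> finite (Ys j) \<and> y0 j \<in> Ys j"
    and "1 + (\<Sum>j<m. real (card (Ys j)) - 1)
           \<ge> real (card (PiE {..<n} Xs)) / real (Max ((\<lambda>i. card (Xs i)) ` {..<n}))"
  shows "prob_simplex (PiE {..<n} Xs) \<subseteq> closure (RBM n Xs x0 m Ys y0)"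
proof -
  note hX = assms(2) and hY = assms(3)
  define X where "X = PiE {..<n} Xs"
  define P where "P = (\<lambda>k. {p \<in> X. p k = x0 k})"
  obtain k where k: "k < n" and kmax: "card (Xs k) = Max ((\<lambda>i. card (Xs i)) ` {..<n})"
    using Max_in[of "(\<lambda>i. card (Xs i)) ` {..<n}"] assms(1) by fastforce
  have finX: "finite X" using hX by (auto simp: X_def intro!: finite_PiE)
  have Xne: "X \<noteq> {}" using hX by (auto simp: X_def PiE_eq_empty_iff)
  have cardk: "card (Xs k) > 0" using hX[OF k] by (auto simp: card_gt_0_iff)
  have bij: "bij_betw (\<lambda>x. (x(k := x0 k), x k)) X (P k \<times> Xs k)"
  proof (rule bij_betwI[where g="\<lambda>(p,a). p(k := a)"])
    show "(\<lambda>x. (x(k := x0 k), x k)) \<in> X \<rightarrow> P k \<times> Xs k"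
      using hX k by (auto simp: X_def P_def PiE_iff extensional_def)
    show "(\<lambda>(p, a). p(k := a)) \<in> P k \<times> Xs k \<rightarrow> X"
      using k by (auto simp: X_def P_def PiE_iff extensional_def) (metis not_less)
  qed (auto simp: P_def)
  have cardX: "card X = card (P k) * card (Xs k)"
    using bij_betw_same_card[OF bij] by (simp add: card_cartesian_product)
  define H where "H = (SIGMA j:{..<m}. Ys j - {y0 j})"
  have cardH: "real (card H) = (\<Sum>j<m. real (card (Ys j)) - 1)"
  proof -
    have "card H = (\<Sum>j<m. card (Ys j - {y0 j}))"
      unfolding H_def using hY by (subst card_SigmaI) auto
    also have "\<dots> = (\<Sum>j<m. card (Ys j) - 1)"
      using hY by (intro sum.cong) (auto simp: card_Diff_singleton)
    finally have "real (card H) = (\<Sum>j<m. real (card (Ys j) - 1))" by simp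
    also have "\<dots> = (\<Sum>j<m. real (card (Ys j)) - 1)"
    proof (intro sum.cong refl)
      fix j assume "j \<in> {..<m}"
      then have "card (Ys j) > 0" using hY[of j] by (auto simp: card_gt_0_iff)
      then show "real (card (Ys j) - 1) = real (card (Ys j)) - 1" by (simp add: of_nat_diff)
    qed
    finally show ?thesis .
  qed
  have "real (card (P k)) = real (card X) / real (card (Xs k))"
    using cardk by (simp add: cardX)
  also have "\<dots> \<le> 1 + real (card H)" using assms(4) kmax cardH by (simp add: X_def)
  finally have hcard: "card (P k) \<le> 1 + card H" by linarith
  have pos: "q \<in> closure (RBM n Xs x0 m Ys y0)"
    if "\<And>x. x \<notin> X \<Longrightarrow> q x = 0" "\<And>x. x \<in> X \<Longrightarrow> q x > 0" "sum q X = 1" for q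
    by (rule positive_in_closure[OF hX hY k]) (use that hcard in \<open>auto simp: X_def P_def H_def\<close>)
  show ?thesis
  proof
    fix q assume q: "q \<in> prob_simplex (PiE {..<n} Xs)"
    then have q0: "\<And>x. x \<notin> X \<Longrightarrow> q x = 0" and qnn: "\<And>x. x \<in> X \<Longrightarrow> q x \<ge> 0"
      and qs: "sum q X = 1" by (auto simp: prob_simplex_def X_def)
    define c where "c = real (card X)"
    have cpos: "c > 0" using finX Xne by (simp add: c_def card_gt_0_iff)
    define qe where "qe = (\<lambda>(N::nat) x. (1 - inverse (real (Suc N))) * q x + (if x \<in> X then inverse (real (Suc N)) / c else 0))"
    have inX: "qe N \<in> closure (RBM n Xs x0 m Ys y0)" for N
    proof (rule pos)
      show "\<And>x. x \<notin> X \<Longrightarrow> qe N x = 0" using q0 by (simp add: qe_def)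
      show "\<And>x. x \<in> X \<Longrightarrow> qe N x > 0"
      proof -
        fix x assume "x \<in> X"
        have "(1 - inverse (real (Suc N))) * q x \<ge> 0"
          using qnn[OF \<open>x \<in> X\<close>] by (intro mult_nonneg_nonneg) (auto simp: field_simps)
        moreover have "inverse (real (Suc N)) / c > 0" using cpos by simp
        ultimately show "qe N x > 0" using \<open>x \<in> X\<close> by (simp add: qe_def)
      qed
      have "sum (qe N) X = (1 - inverse (real (Suc N))) * sum q X + (\<Sum>x\<in>X. inverse (real (Suc N)) / c)"
        by (simp add: qe_def sum.distrib sum_distrib_left)
      also have "\<dots> = 1" using qs cpos by (simp add: c_def)
      finally show "sum (qe N) X = 1" .
    qed
    have "(qe \<longlongrightarrow> q) sequentially"
    proof (rule tendsto_fun_pointwise)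
      fix x
      show "((\<lambda>N. qe N x) \<longlongrightarrow> q x) sequentially"
      proof (cases "x \<in> X")
        case True
        have "((\<lambda>N. (1 - inverse (real (Suc N))) * q x + inverse (real (Suc N)) / c)
           \<longlongrightarrow> (1 - 0) * q x + 0 / c) sequentially"
          using cpos by (intro tendsto_intros LIMSEQ_inverse_real_of_nat) auto
        then show ?thesis using True by (simp add: qe_def)
      next
        case False
        then show ?thesis using q0 by (simp add: qe_def)
      qed
    qed
    then show "q \<in> closure (RBM n Xs x0 m Ys y0)"
      by (rule Lim_in_closed_set[OF closed_closure always_eventually[OF allI[OF inX]] trivial_limit_sequentially])
  qed
qed

end
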